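(* For every vertex $t\in\mathbb T_n$, $\tilde G_t\tilde B_t=\tilde B_{t_0}C_t$.
   Context: $m\ge n\ge1$, $[b]_+=\max(b,0)$. $\mathbb T_n$ is the $n$-regular tree with edges labeled $1,\dots,n$, distinct labels at each vertex; $t\overset{k}{-}t'$ denotes an edge labeled $k$; $t_0$ a root. Fix positive integers $r_1,\dots,r_n$, $R=\mathrm{diag}(r_1,\dots,r_n)$, and an integer $m\times n$ matrix $\tilde B=(b_{ij})$ whose top $n\times n$ part $B$ is skew-symmetrizable (in the paper $\tilde B$ is part of a compatible pair $(\tilde B,\Lambda)$ of an $(R,\mathbf h)$-quantum seed). Assign matrices $\tilde B_t=(b_{ij;t})$ ($m\times n$) with $\tilde B_{t_0}=\tilde B$ and, for $t\overset{k}{-}t'$, $\tilde B_{t'}=E\tilde B_tF$ where $E$ is the $m\times m$ identity with $k$-th column replaced by $-1$ at position $k$ and $[-\varepsilon b_{ik;t}r_k]_+$ at positions $i\neq k$, and $F$ is the $n\times n$ identity with $k$-th row replaced by $-1$ at position $k$ and $[\varepsilon r_kb_{ki;t}]_+$ at positions $i\ne k$ (equivalently $b_{ij;t'}=-b_{ij;t}$ if $i=k$ or $j=k$, else $b_{ij;t}+r_k([-\varepsilon b_{ik;t}]_+b_{kj;t}+b_{ik;t}[\varepsilon b_{kj;t}]_+)$); here and below $\varepsilon\in\{\pm1\}$ and the results are independent of it. Let $B_t$ be the top $n\times n$ part of $\tilde B_t$. The $n\times n$ matrix $C_t=(c_{ij;t})$ is defined by $C_{t_0}=I_n$ and $c_{ij;t'}=-c_{ij;t}$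 if $j=k$, else $c_{ij;t}+r_k(c_{ik;t}[\varepsilon b_{kj;t}]_++[-\varepsilon c_{ik;t}]_+b_{kj;t})$. The $m\times m$ matrix $\tilde G_t$ with columns $\tilde{\mathbf g}_{i;t}$ is defined by $\tilde G_{t_0}=I_m$ and $\tilde{\mathbf g}_{i;t'}=\tilde{\mathbf g}_{i;t}$ for $i\ne k$, $\tilde{\mathbf g}_{k;t'}=-\tilde{\mathbf g}_{k;t}+r_k\big(\sum_{j=1}^m[-\varepsilon b_{jk;t}]_+\tilde{\mathbf g}_{j;t}-\sum_{j=1}^n[-\varepsilon c_{jk;t}]_+\mathbf b_{j;t_0}\big)$, where $\mathbf b_{j;t_0}$ is the $j$-th column of $\tilde B$. *)

theory Defs
  imports Main
begin

text \<open>Integer matrices are functions nat => nat => int, indices 1-based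
  (row i, column j). Only entries with 1 <= i <= m, 1 <= j <= n (resp. m, m)
  are meaningful.\<close>

type_synonym imat = "nat \<Rightarrow> nat \<Rightarrow> int"

definition pos :: "int \<Rightarrow> int" where
  "pos b = max b 0"

definition skew_symmetrizable :: "nat \<Rightarrow> imat \<Rightarrow> bool" where
  "skew_symmetrizable n B \<longleftrightarrow>
     (\<exists>d :: nat \<Rightarrow> int. (\<forall>i\<in>{1..n}. d i > 0) \<and>
        (\<forall>i\<in>{1..n}. \<forall>j\<in>{1..n}. d i * B i j = - (d j * B j i)))"

definition mutB :: "(nat \<Rightarrow> int) \<Rightarrow> nat \<Rightarrow> int \<Rightarrow> imat \<Rightarrow> imat" where
  "mutB r k e B = (\<lambda>i j. if i = k \<or> j = k then - B i j
      else B i j + r k * (pos (- e * B i k) * B k j + B i k * pos (e * B k j)))"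

definition mutC :: "(nat \<Rightarrow> int) \<Rightarrow> nat \<Rightarrow> int \<Rightarrow> imat \<Rightarrow> imat \<Rightarrow> imat" where
  "mutC r k e B C = (\<lambda>i j. if j = k then - C i j
      else C i j + r k * (C i k * pos (e * B k j) + pos (- e * C i k) * B k j))"

text \<open>Mutation of the extended G-matrix (column j is the vector g_j);
  B0 is the initial matrix, B = B_t, C = C_t.\<close>
definition mutG :: "nat \<Rightarrow> nat \<Rightarrow> (nat \<Rightarrow> int) \<Rightarrow> nat \<Rightarrow> int \<Rightarrow> imat \<Rightarrow> imat \<Rightarrow> imat \<Rightarrow> imat \<Rightarrow> imat" where
  "mutG m n r k e B0 B C G = (\<lambda>i j. if j \<noteq> k then G i j
      else - G i k + r k * ((\<Sum>l=1..m. pos (- e * B l k) * G i l)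
                           - (\<Sum>l=1..n. pos (- e * C l k) * B0 i l)))"

definition idm :: imat where
  "idm = (\<lambda>i j. if i = j then 1 else 0)"

definition mut_step :: "nat \<Rightarrow> nat \<Rightarrow> (nat \<Rightarrow> int) \<Rightarrow> imat \<Rightarrow> imat \<times> imat \<times> imat \<Rightarrow> nat \<times> int \<Rightarrow> imat \<times> imat \<times> imat" where
  "mut_step m n r B0 S ke = (case S of (B, C, G) \<Rightarrow> (case ke of (k, e) \<Rightarrow>
      (mutB r k e B, mutC r k e B C, mutG m n r k e B0 B C G)))"

text \<open>The triple (B_t, C_t, G_t) at the vertex t reached from t_0 along the
  path whose successive edges have the labels and signs in the list
  (the first list element is the edge at t_0).\<close>
definition seed :: "nat \<Rightarrow> nat \<Rightarrow> (nat \<Rightarrow> int) \<Rightarrow> imat \<Rightarrow> (nat \<times> int) list \<Rightarrow> imat \<times> imat \<times> imat" where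
  "seed m n r B0 path = foldl (mut_step m n r B0) (B0, idm, idm) path"

text \<open>Vertices of the n-regular tree T_n correspond bijectively to the
  label sequences of paths from t_0 without backtracking: labels in {1..n},
  consecutive labels distinct.\<close>
definition tree_path :: "nat \<Rightarrow> nat list \<Rightarrow> bool" where
  "tree_path n ks \<longleftrightarrow> set ks \<subseteq> {1..n} \<and>
     (\<forall>i. Suc i < length ks \<longrightarrow> ks ! i \<noteq> ks ! Suc i)"

end

theory Submission imports Defs begin
lemma pos_mult: "(d::int) > 0 \<Longrightarrow> d * pos x = pos (d * x)"
  unfolding pos_def by (auto simp: max_def mult_le_0_iff)

lemma a1: "(di::int) > 0 \<Longrightarrow> dk > 0 \<Longrightarrow> di * bik = - (dk * bki) \<Longrightarrow>
   di * pos (- e * bik) = dk * pos (e * bki)"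
proof -
  assume di: "di > 0" and dk: "dk > 0" and e1: "di * bik = - (dk * bki)"
  have "di * pos (- e * bik) = pos (di * (- e * bik))" by (rule pos_mult[OF di])
  also have "di * (- e * bik) = dk * (e * bki)"
    by (metis e1 minus_mult_minus mult.left_commute mult_minus_left)
  also have "pos (dk * (e * bki)) = dk * pos (e * bki)" by (rule pos_mult[OF dk, symmetric])
  finally show ?thesis .
qed
lemma a2:
  fixes di dj dk bij bji bik bki bjk bkj P1 Q1 P3 Q4 r :: int
  assumes "di*bij = -(dj*bji)" "di*P1 = dk*Q4" "dj*P3 = dk*Q1" "di*bik = -(dk*bki)" "dj*bjk = -(dk*bkj)"
  shows "di*(bij + r*(P1*bkj + bik*Q1)) = -(dj*(bji + r*(P3*bki + bjk*Q4)))"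
proof -
  have "di*(bij + r*(P1*bkj + bik*Q1)) + dj*(bji + r*(P3*bki + bjk*Q4))
     = (di*bij + dj*bji) + r*((di*P1)*bkj + (di*bik)*Q1 + (dj*P3)*bki + (dj*bjk)*Q4)"
    by (simp add: algebra_simps)
  also have "\<dots> = 0" using assms by (simp add: algebra_simps)
  finally show ?thesis by simp
qed
lemma skew_step:
  fixes d :: "nat \<Rightarrow> int"
  assumes dpos: "\<forall>i\<in>{1..n}. d i > 0"
    and sk: "\<forall>i\<in>{1..n}. \<forall>j\<in>{1..n}. d i * B i j = - (d j * B j i)"
    and k: "k \<in> {1..n}"
  shows "\<forall>i\<in>{1..n}. \<forall>j\<in>{1..n}. d i * mutB r k e B i j = - (d j * mutB r k e B j i)"
proof (intro ballI)
  fix i j assume i: "i \<in> {1..n}" and j: "j \<in> {1..n}"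
  have eij: "d i * B i j = - (d j * B j i)" using sk i j by blast
  show "d i * mutB r k e B i j = - (d j * mutB r k e B j i)"
  proof (cases "i = k \<or> j = k")
    case True
    then have "mutB r k e B i j = - B i j" "mutB r k e B j i = - B j i"
      unfolding mutB_def by auto
    then show ?thesis using eij by simp
  next
    case False
    have di: "d i > 0" and dj: "d j > 0" and dk: "d k > 0" using dpos i j k by auto
    have e1: "d i * B i k = - (d k * B k i)" using sk i k by blast
    have e2: "d j * B j k = - (d k * B k j)" using sk j k by blast
    have m1: "mutB r k e B i j = B i j + r k * (pos (- e * B i k) * B k j + B i k * pos (e * B k j))"
      using False unfolding mutB_def by auto
    have m2: "mutB r k e B j i = B j i + r k * (pos (- e * B j k) * B k i + B j k * pos (e * B k i))"
      using False unfolding mutB_def by auto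
    show ?thesis unfolding m1 m2
      by (rule a2[OF eij a1[OF di dk e1] a1[OF dj dk e2] e1 e2])
  qed
qed
lemma inv_step:
  fixes d :: "nat \<Rightarrow> int"
  assumes nm: "n \<le> m"
    and k: "k \<in> {1..n}"
    and bkk: "B k k = 0"
    and inv: "\<forall>i\<in>{1..m}. \<forall>j\<in>{1..n}.
           (\<Sum>l=1..m. G i l * B l j) = (\<Sum>l=1..n. B0 i l * C l j)"
  shows "\<forall>i\<in>{1..m}. \<forall>j\<in>{1..n}.
           (\<Sum>l=1..m. mutG m n r k e B0 B C G i l * mutB r k e B l j)
          = (\<Sum>l=1..n. B0 i l * mutC r k e B C l j)"
proof (intro ballI)
  fix i j assume i: "i \<in> {1..m}" and j: "j \<in> {1..n}"
  define A where "A = {1..m} - {k}"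
  have km: "k \<in> {1..m}" using k nm by auto
  have fA: "finite A" unfolding A_def by simp
  have split: "\<And>f. (\<Sum>l=1..m. f l) = f k + (\<Sum>l\<in>A. f l)"
    unfolding A_def using km by (simp add: sum.remove)
  have kA: "k \<notin> A" unfolding A_def by simp
  define S1 where "S1 = (\<Sum>l=1..m. pos (- e * B l k) * G i l)"
  define S2 where "S2 = (\<Sum>l=1..n. pos (- e * C l k) * B0 i l)"
  have G'k: "mutG m n r k e B0 B C G i k = - G i k + r k * (S1 - S2)"
    unfolding mutG_def S1_def S2_def by simp
  have G'l: "\<And>l. l \<in> A \<Longrightarrow> mutG m n r k e B0 B C G i l = G i l"
    using kA unfolding mutG_def by auto
  have invk: "(\<Sum>l=1..m. G i l * B l k) = (\<Sum>l=1..n. B0 i l * C l k)" using inv i k by auto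
  have invj: "(\<Sum>l=1..m. G i l * B l j) = (\<Sum>l=1..n. B0 i l * C l j)" using inv i j by auto
  have sk: "(\<Sum>l=1..m. G i l * B l k) = (\<Sum>l\<in>A. G i l * B l k)"
    using split[of "\<lambda>l. G i l * B l k"] bkk by simp
  have s1: "S1 = (\<Sum>l\<in>A. G i l * pos (- e * B l k))"
    using split[of "\<lambda>l. pos (- e * B l k) * G i l"] bkk unfolding S1_def
    by (simp add: pos_def mult.commute)
  show "(\<Sum>l=1..m. mutG m n r k e B0 B C G i l * mutB r k e B l j)
          = (\<Sum>l=1..n. B0 i l * mutC r k e B C l j)"
  proof (cases "j = k")
    case True
    have "(\<Sum>l=1..m. mutG m n r k e B0 B C G i l * mutB r k e B l j)
        = mutG m n r k e B0 B C G i k * mutB r k e B k k + (\<Sum>l\<in>A. G i l * (- B l k))"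
    proof -
      have "(\<Sum>l\<in>A. mutG m n r k e B0 B C G i l * mutB r k e B l j) = (\<Sum>l\<in>A. G i l * (- B l k))"
        by (rule sum.cong) (simp_all add: G'l True mutB_def)
      then show ?thesis using split[of "\<lambda>l. mutG m n r k e B0 B C G i l * mutB r k e B l j"] True by simp
    qed
    also have "\<dots> = - (\<Sum>l\<in>A. G i l * B l k)"
      using bkk unfolding mutB_def by (simp add: sum_negf)
    also have "\<dots> = - (\<Sum>l=1..n. B0 i l * C l k)" using sk invk by simp
    also have "\<dots> = (\<Sum>l=1..n. B0 i l * mutC r k e B C l j)"
      using True unfolding mutC_def by (simp add: sum_negf)
    finally show ?thesis .
  next
    case False
    have jk: "j \<noteq> k" using False .
    have "(\<Sum>l=1..m. mutG m n r k e B0 B C G i l * mutB r k e B l j)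
        = (- G i k + r k * (S1 - S2)) * (- B k j)
          + (\<Sum>l\<in>A. G i l * (B l j + r k * (pos (- e * B l k) * B k j + B l k * pos (e * B k j))))"
    proof -
      have "(\<Sum>l\<in>A. mutG m n r k e B0 B C G i l * mutB r k e B l j) = (\<Sum>l\<in>A. G i l * (B l j + r k * (pos (- e * B l k) * B k j + B l k * pos (e * B k j))))"
        by (rule sum.cong) (use kA jk in \<open>auto simp add: G'l mutB_def\<close>)
      moreover have "mutB r k e B k j = - B k j" using jk unfolding mutB_def by simp
      ultimately show ?thesis using split[of "\<lambda>l. mutG m n r k e B0 B C G i l * mutB r k e B l j"] G'k by simp
    qed
    also have "(\<Sum>l\<in>A. G i l * (B l j + r k * (pos (- e * B l k) * B k j + B l k * pos (e * B k j))))
        = (\<Sum>l\<in>A. G i l * B l j) + r k * B k j * (\<Sum>l\<in>A. G i l * pos (- e * B l k))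
          + r k * pos (e * B k j) * (\<Sum>l\<in>A. G i l * B l k)"
      by (simp add: sum.distrib sum_distrib_left algebra_simps)
    also have "(\<Sum>l\<in>A. G i l * B l j) = (\<Sum>l=1..m. G i l * B l j) - G i k * B k j"
      using split[of "\<lambda>l. G i l * B l j"] by simp
    finally have L: "(\<Sum>l=1..m. mutG m n r k e B0 B C G i l * mutB r k e B l j)
        = (\<Sum>l=1..m. G i l * B l j) + r k * pos (e * B k j) * (\<Sum>l=1..n. B0 i l * C l k)
          + r k * B k j * S2"
      using s1 sk invk by (simp add: algebra_simps)
    have R: "(\<Sum>l=1..n. B0 i l * mutC r k e B C l j)
        = (\<Sum>l=1..n. B0 i l * C l j) + r k * pos (e * B k j) * (\<Sum>l=1..n. B0 i l * C l k)
          + r k * B k j * S2"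
      using jk unfolding mutC_def S2_def
      by (simp add: sum.distrib sum_distrib_left algebra_simps)
    show ?thesis using L R invj by simp
  qed
qed

lemma seed_snoc: "seed m n r B0 (xs @ [x]) = mut_step m n r B0 (seed m n r B0 xs) x"
  unfolding seed_def by simp

lemma main_inv:
  fixes d :: "nat \<Rightarrow> int"
  assumes nm: "n \<le> m"
    and dpos: "\<forall>i\<in>{1..n}. d i > 0"
    and sk0: "\<forall>i\<in>{1..n}. \<forall>j\<in>{1..n}. d i * B0 i j = - (d j * B0 j i)"
  shows "set (map fst path) \<subseteq> {1..n} \<Longrightarrow> seed m n r B0 path = (Bt, Ct, Gt) \<Longrightarrow>
    (\<forall>i\<in>{1..n}. \<forall>j\<in>{1..n}. d i * Bt i j = - (d j * Bt j i)) \<and>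
    (\<forall>i\<in>{1..m}. \<forall>j\<in>{1..n}.
           (\<Sum>l=1..m. Gt i l * Bt l j) = (\<Sum>l=1..n. B0 i l * Ct l j))"
proof (induction path arbitrary: Bt Ct Gt rule: rev_induct)
  case Nil
  then have e: "Bt = B0" "Ct = idm" "Gt = idm" unfolding seed_def by auto
  have "\<forall>i\<in>{1..m}. \<forall>j\<in>{1..n}.
           (\<Sum>l=1..m. idm i l * B0 l j) = (\<Sum>l=1..n. B0 i l * idm l j)"
  proof (intro ballI)
    fix i j
    assume ij: "i \<in> {1..m}" "j \<in> {1..n}"
    have "(\<Sum>l=1..m. idm i l * B0 l j) = (\<Sum>l\<in>{1..m}. if i = l then B0 l j else 0)"
      by (rule sum.cong) (auto simp: idm_def)
    also have "\<dots> = B0 i j" using ij by (simp add: sum.delta)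
    also have "B0 i j = (\<Sum>l\<in>{1..n}. if l = j then B0 i l else 0)" using ij by (simp add: sum.delta')
    also have "\<dots> = (\<Sum>l=1..n. B0 i l * idm l j)"
      by (rule sum.cong) (auto simp: idm_def)
    finally show "(\<Sum>l=1..m. idm i l * B0 l j) = (\<Sum>l=1..n. B0 i l * idm l j)" .
  qed
  then show ?case unfolding e using sk0 by blast
next
  case (snoc x xs)
  obtain B C G where s: "seed m n r B0 xs = (B, C, G)" using prod_cases3 by blast
  obtain k e where x: "x = (k, e)" by (cases x) blast
  have k: "k \<in> {1..n}" using snoc.prems(1) x by simp
  have IH: "(\<forall>i\<in>{1..n}. \<forall>j\<in>{1..n}. d i * B i j = - (d j * B j i)) \<and>
    (\<forall>i\<in>{1..m}. \<forall>j\<in>{1..n}.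
           (\<Sum>l=1..m. G i l * B l j) = (\<Sum>l=1..n. B0 i l * C l j))"
  proof -
    have xs1: "set (map fst xs) \<subseteq> {1..n}" using snoc.prems(1) by simp
    show ?thesis by (rule snoc.IH[OF xs1 s])
  qed
  have bkk: "B k k = 0"
  proof -
    have "d k * B k k = - (d k * B k k)" using IH k by blast
    moreover have "d k > 0" using dpos k by blast
    ultimately show ?thesis by simp
  qed
  have e: "Bt = mutB r k e B" "Ct = mutC r k e B C" "Gt = mutG m n r k e B0 B C G"
    using snoc.prems(2) unfolding seed_snoc s x mut_step_def by simp_all
  have c1: "\<forall>i\<in>{1..n}. \<forall>j\<in>{1..n}. d i * mutB r k e B i j = - (d j * mutB r k e B j i)"
    by (rule skew_step[OF dpos _ k]) (use IH in blast)
  have c2: "\<forall>i\<in>{1..m}. \<forall>j\<in>{1..n}.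
           (\<Sum>l=1..m. mutG m n r k e B0 B C G i l * mutB r k e B l j)
          = (\<Sum>l=1..n. B0 i l * mutC r k e B C l j)"
    by (rule inv_step[where B=B, OF nm k bkk]) (use IH in blast)
  show ?case unfolding e using c1 c2 by (rule conjI)
qed

theorem mainTheorem7:
  fixes m n :: nat and r :: "nat \<Rightarrow> int" and B0 :: imat
    and path :: "(nat \<times> int) list"
  assumes "1 \<le> n" and "n \<le> m"
    and "\<forall>k\<in>{1..n}. r k > 0"
    and "skew_symmetrizable n B0"
    and "tree_path n (map fst path)"
    and "\<forall>e\<in>set (map snd path). e = 1 \<or> e = -1"
    and "seed m n r B0 path = (Bt, Ct, Gt)"
  shows "\<forall>i\<in>{1..m}. \<forall>j\<in>{1..n}.
           (\<Sum>l=1..m. Gt i l * Bt l j) = (\<Sum>l=1..n. B0 i l * Ct l j)"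
proof -
  obtain d :: "nat \<Rightarrow> int" where d: "\<forall>i\<in>{1..n}. d i > 0"
    "\<forall>i\<in>{1..n}. \<forall>j\<in>{1..n}. d i * B0 i j = - (d j * B0 j i)"
    using assms(4) unfolding skew_symmetrizable_def by blast
  have "set (map fst path) \<subseteq> {1..n}" using assms(5) unfolding tree_path_def by blast
  then show ?thesis using main_inv[OF assms(2) d, of path] assms(7) by blast
qed

end
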